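(* Let $X=[X_{\alpha\beta}]_{\alpha,\beta=1}^K$ be a positive definite matrix partitioned into $K\times K$ blocks $X_{\alpha\beta}\in\mathbb{C}^{d\times d}$. If $X$ is block diagonally dominant, i.e. for every $\alpha$, $$\|X_{\alpha\alpha}^{-1}\|^{-1}\ \ge\ \sum_{\beta\neq\alpha}\|X_{\alpha\beta}\|,$$ then $X$ has block coherence number at most two, i.e. $X\in\mathcal{BC}_2$.
   Context: $\|Y\|$ denotes the largest singular value of $Y$; for positive definite $X_{\alpha\alpha}$, $\|X_{\alpha\alpha}^{-1}\|^{-1}$ is the smallest eigenvalue of $X_{\alpha\alpha}$. Let $P_\alpha$ be the orthogonal projector onto the $\alpha$-th block of coordinates ($\mathbb{C}^{Kd}=\bigoplus_\alpha\mathbb{C}^d$). $\mathcal{BC}_k$ is the set of all finite sums of operators $|\psi\rangle\langle\psi|$ where $|\psi\rangle$ has at most $k$ nonzero components $P_\alpha|\psi\rangle$; the block coherence number $bcn(X)$ is the least $k$ with $X\in\mathcal{BC}_k$. *)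

theory Defs
  imports "HOL-Analysis.Analysis"
begin

text \<open>A matrix on C^(Kd) = direct sum of K copies of C^d, indexed by pairs (alpha, i)
  with alpha a block index (type 'k) and i a coordinate inside the block (type 'd).\<close>

type_synonym ('k, 'd) bmat = "complex ^ ('k \<times> 'd) ^ ('k \<times> 'd)"
type_synonym ('k, 'd) bvec = "complex ^ ('k \<times> 'd)"

definition quad_form :: "complex ^ 'n::finite ^ 'n \<Rightarrow> complex ^ 'n \<Rightarrow> complex" where
  "quad_form A x = (\<Sum>i\<in>UNIV. \<Sum>j\<in>UNIV. cnj (x $ i) * A $ i $ j * x $ j)"

definition hermitian_mat :: "complex ^ 'n::finite ^ 'n \<Rightarrow> bool" where
  "hermitian_mat A \<longleftrightarrow> (\<forall>i j. A $ i $ j = cnj (A $ j $ i))"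

definition pos_def :: "complex ^ 'n::finite ^ 'n \<Rightarrow> bool" where
  "pos_def A \<longleftrightarrow> hermitian_mat A \<and>
     (\<forall>x. x \<noteq> 0 \<longrightarrow> quad_form A x \<in> \<real> \<and> Re (quad_form A x) > 0)"

definition opnorm :: "complex ^ 'n::finite ^ 'm::finite \<Rightarrow> real" where
  "opnorm A = onorm (\<lambda>v. A *v v)"

definition blk :: "('k::finite, 'd::finite) bmat \<Rightarrow> 'k \<Rightarrow> 'k \<Rightarrow> complex ^ 'd ^ 'd" where
  "blk X \<alpha> \<beta> = (\<chi> i j. X $ (\<alpha>, i) $ (\<beta>, j))"

definition block_diag_dominant :: "('k::finite, 'd::finite) bmat \<Rightarrow> bool" where
  "block_diag_dominant X \<longleftrightarrow>
     (\<forall>\<alpha>. inverse (opnorm (matrix_inv (blk X \<alpha> \<alpha>))) \<ge> (\<Sum>\<beta>\<in>UNIV - {\<alpha>}. opnorm (blk X \<alpha> \<beta>)))"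

definition block_comp :: "('k::finite, 'd::finite) bvec \<Rightarrow> 'k \<Rightarrow> complex ^ 'd" where
  "block_comp \<psi> \<alpha> = (\<chi> i. \<psi> $ (\<alpha>, i))"

definition block_support :: "('k::finite, 'd::finite) bvec \<Rightarrow> 'k set" where
  "block_support \<psi> = {\<alpha>. block_comp \<psi> \<alpha> \<noteq> 0}"

definition outer :: "complex ^ 'n::finite \<Rightarrow> complex ^ 'n ^ 'n" where
  "outer \<psi> = (\<chi> i j. \<psi> $ i * cnj (\<psi> $ j))"

definition BC :: "nat \<Rightarrow> ('k::finite, 'd::finite) bmat set" where
  "BC k = {X. \<exists>\<psi>s. (\<forall>\<psi>\<in>set \<psi>s. card (block_support \<psi>) \<le> k) \<and> X = sum_list (map outer \<psi>s)}"

end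

theory Submission
  imports Defs
begin


definition sesq :: "complex ^ 'n::finite ^ 'n \<Rightarrow> complex ^ 'n \<Rightarrow> complex ^ 'n \<Rightarrow> complex" where
  "sesq A x y = (\<Sum>i\<in>UNIV. \<Sum>j\<in>UNIV. cnj (x $ i) * A $ i $ j * y $ j)"

definition psd :: "complex ^ 'n::finite ^ 'n \<Rightarrow> bool" where
  "psd A \<longleftrightarrow> hermitian_mat A \<and> (\<forall>x. 0 \<le> Re (quad_form A x))"

lemma quad_sesq: "quad_form A x = sesq A x x"
  by (simp add: quad_form_def sesq_def)

lemma sesq_add_left: "sesq A (x + y) z = sesq A x z + sesq A y z"
  by (simp add: sesq_def distrib_left distrib_right sum.distrib)
lemma sesq_add_right: "sesq A x (y + z) = sesq A x y + sesq A x z"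
  by (simp add: sesq_def distrib_left distrib_right sum.distrib)
lemma sesq_scale_left: "sesq A (c *s x) z = cnj c * sesq A x z"
  by (simp add: sesq_def sum_distrib_left mult.assoc)
lemma sesq_scale_right: "sesq A x (c *s z) = c * sesq A x z"
  by (simp add: sesq_def sum_distrib_left mult.assoc mult.left_commute)
lemma sesq_herm: assumes "hermitian_mat A" shows "sesq A y x = cnj (sesq A x y)"
proof -
  have "cnj (sesq A x y) = (\<Sum>i\<in>UNIV. \<Sum>j\<in>UNIV. cnj (y $ j) * A $ j $ i * x $ i)"
    unfolding sesq_def cnj_sum
    by (intro sum.cong refl) (metis assms hermitian_mat_def complex_cnj_mult complex_cnj_cnj mult.commute mult.assoc)
  also have "\<dots> = sesq A y x" unfolding sesq_def by (rule sum.swap)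
  finally show ?thesis by simp
qed

lemma real_of_cnj: "cnj z = z \<Longrightarrow> z = of_real (Re z)"
  by (metis Reals_cnj_iff complex_is_Real_iff of_real_Re)

lemma quad_real: "hermitian_mat A \<Longrightarrow> quad_form A x = of_real (Re (quad_form A x))"
  by (metis quad_sesq sesq_herm real_of_cnj)


lemma quad_ineq_aux:
  fixes a b c :: real
  assumes "\<And>t. 0 \<le> a - 2 * t * b + t^2 * b * c" "b \<ge> 0" "a \<ge> 0" "c \<ge> 0"
  shows "b \<le> a * c"
proof (cases "b = 0")
  case True then show ?thesis using assms by simp
next
  case False
  then have bp: "b > 0" using assms by simp
  show ?thesis
  proof (cases "c = 0")
    case True
    have "0 \<le> a - 2 * ((a+1)/(2*b)) * b" using assms(1)[of "(a+1)/(2*b)"] True by simp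
    also have "\<dots> = -1" using bp by (simp add: field_simps)
    finally show ?thesis by simp
  next
    case False
    then have cp: "c > 0" using assms by simp
    have "0 \<le> a - 2 * (1/c) * b + (1/c)^2 * b * c" using assms(1) by blast
    also have "\<dots> = a - b / c" using cp by (simp add: field_simps power2_eq_square)
    finally show ?thesis using cp by (simp add: field_simps)
  qed
qed

lemma cauchy_schwarz_psd:
  assumes "psd A"
  shows "(cmod (sesq A x y))^2 \<le> Re (quad_form A x) * Re (quad_form A y)"
proof -
  have h: "hermitian_mat A" using assms by (simp add: psd_def)
  define b where "b = sesq A y x"
  have xy: "sesq A x y = cnj b" using sesq_herm[OF h, of y x] by (simp add: b_def)
  have bb: "b * cnj b = of_real ((cmod b)^2)" by (rule complex_norm_square[symmetric])
  have "0 \<le> Re (sesq A x x) - 2 * t * (cmod b)^2 + t^2 * (cmod b)^2 * Re (sesq A y y)" for t :: real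
  proof -
    have "0 \<le> Re (quad_form A (x + (- (of_real t * b)) *s y))" using assms by (simp add: psd_def)
    also have "quad_form A (x + (- (of_real t * b)) *s y) =
       sesq A x x - of_real t * (b * cnj b) - of_real t * (b * cnj b) + of_real t * of_real t * (b * cnj b) * sesq A y y"
      unfolding quad_sesq sesq_add_left sesq_add_right sesq_scale_left sesq_scale_right xy b_def[symmetric]
      by (simp add: algebra_simps)
    also have "\<dots> = sesq A x x - of_real (2 * t * (cmod b)^2) + of_real (t^2 * (cmod b)^2) * sesq A y y"
      unfolding bb by (simp add: power2_eq_square algebra_simps)
    finally show ?thesis by simp
  qed
  from quad_ineq_aux[OF this] have "(cmod b)^2 \<le> Re (sesq A x x) * Re (sesq A y y)"
    using assms by (simp add: psd_def quad_sesq)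
  then show ?thesis using xy by (simp add: quad_sesq)
qed



lemma sum_delta_right: "(\<Sum>j\<in>UNIV. f j * (if j = b then 1 else 0)) = (f (b::'n::finite) :: 'a::comm_ring_1)"
proof -
  have "(\<Sum>j\<in>UNIV. f j * (if j = b then 1 else 0)) = (\<Sum>j\<in>UNIV. if j = b then f j else 0)"
    by (intro sum.cong) auto
  also have "\<dots> = f b" by (simp add: sum.delta)
  finally show ?thesis .
qed

lemma sum_delta_left: "(\<Sum>j\<in>UNIV. (if j = b then 1 else 0) * f j) = (f (b::'n::finite) :: 'a::comm_ring_1)"
  using sum_delta_right[of f b] by (simp add: mult.commute)

lemma axis_cnj: "cnj (axis a 1 $ i) = axis a 1 $ i"
  by (simp add: axis_def)

lemma sesq_axis_right: "sesq M x (axis a 1) = (\<Sum>i\<in>UNIV. cnj (x $ i) * M $ i $ a)"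
  unfolding sesq_def by (simp add: axis_def sum_delta_right)

lemma sesq_axis: "sesq M (axis a 1) (axis b 1) = M $ a $ b"
  unfolding sesq_axis_right by (simp add: axis_cnj) (simp add: axis_def sum_delta_left)

lemma quad_axis: "quad_form M (axis a 1) = M $ a $ a"
  by (simp add: quad_sesq sesq_axis)

lemma quad_diff: "quad_form (A - B) x = quad_form A x - quad_form B x"
  by (simp add: quad_form_def algebra_simps sum_subtractf)

lemma quad_outer: "quad_form (outer v) x = of_real ((cmod (\<Sum>i\<in>UNIV. cnj (x $ i) * v $ i))^2)"
proof -
  define z where "z = (\<Sum>i\<in>UNIV. cnj (x $ i) * v $ i)"
  have "quad_form (outer v) x = (\<Sum>i\<in>UNIV. cnj (x $ i) * v $ i) * (\<Sum>i\<in>UNIV. x $ i * cnj (v $ i))"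
    unfolding quad_form_def outer_def sum_product
    by (simp add: mult.commute mult.left_commute)
  also have "(\<Sum>i\<in>UNIV. x $ i * cnj (v $ i)) = cnj z" unfolding z_def cnj_sum by simp
  finally show ?thesis unfolding z_def[symmetric] by (simp only: complex_norm_square)
qed


lemma psd_diag_real: "hermitian_mat M \<Longrightarrow> M $ a $ a = of_real (Re (M $ a $ a))"
  by (metis quad_axis quad_real)

lemma psd_diag_zero_row:
  assumes "psd M" "M $ a $ a = 0"
  shows "M $ a $ j = 0"
proof -
  have "(cmod (sesq M (axis a 1) (axis j 1)))^2 \<le> Re (quad_form M (axis a 1)) * Re (quad_form M (axis j 1))"
    by (rule cauchy_schwarz_psd[OF assms(1)])
  then have "(cmod (M $ a $ j))^2 \<le> 0" using assms(2) by (simp add: sesq_axis quad_axis)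
  then show ?thesis by simp
qed

lemma psd_decomp:
  fixes S :: "'n::finite set"
  assumes "finite S"
  shows "psd M \<Longrightarrow> (\<forall>i j. i \<notin> S \<or> j \<notin> S \<longrightarrow> M $ i $ j = 0) \<Longrightarrow>
    \<exists>\<psi>s. (\<forall>\<psi>\<in>set \<psi>s. \<forall>i. i \<notin> S \<longrightarrow> \<psi> $ i = 0) \<and> M = sum_list (map outer \<psi>s)"
  using assms
proof (induction S arbitrary: M rule: finite_induct)
  case empty
  then have "M = 0" by (simp add: vec_eq_iff)
  then show ?case by (intro exI[of _ "[]"]) simp
next
  case (insert a T M)
  have h: "hermitian_mat M" using insert.prems by (simp add: psd_def)
  define r where "r = Re (M $ a $ a)"
  have Maa: "M $ a $ a = of_real r" unfolding r_def by (rule psd_diag_real[OF h])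
  have r0: "r \<ge> 0" using insert.prems(1) quad_axis[of M a] unfolding psd_def r_def by metis
  show ?case
  proof (cases "r = 0")
    case True
    have row: "M $ a $ j = 0" for j using psd_diag_zero_row[OF insert.prems(1)] Maa True by simp
    have col: "M $ j $ a = 0" for j using row[of j] h unfolding hermitian_mat_def by (metis complex_cnj_zero)
    have "\<forall>i j. i \<notin> T \<or> j \<notin> T \<longrightarrow> M $ i $ j = 0"
    proof (intro allI impI)
      fix i j assume ij: "i \<notin> T \<or> j \<notin> T"
      show "M $ i $ j = 0"
      proof (cases "i = a \<or> j = a")
        case True then show ?thesis using row col by auto
      next
        case False then have "i \<notin> insert a T \<or> j \<notin> insert a T" using ij by auto
        then show ?thesis using insert.prems(2) by blast
      qed
    qed
    from insert.IH[OF insert.prems(1) this] obtain \<psi>s where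
      "(\<forall>\<psi>\<in>set \<psi>s. \<forall>i. i \<notin> T \<longrightarrow> \<psi> $ i = 0)" "M = sum_list (map outer \<psi>s)" by blast
    then show ?thesis by (intro exI[of _ \<psi>s]) auto
  next
    case False
    then have rp: "r > 0" using r0 by simp
    define v where "v = (\<chi> i. M $ i $ a / of_real (sqrt r))"
    have ov: "outer v $ i $ j = M $ i $ a * M $ a $ j / of_real r" for i j
    proof -
      have "cnj (M $ j $ a) = M $ a $ j" using h unfolding hermitian_mat_def by metis
      moreover have "of_real (sqrt r) * of_real (sqrt r) = (of_real r :: complex)"
      proof -
        have s: "sqrt r * sqrt r = r" using rp by simp
        show ?thesis by (metis of_real_mult s)
      qed
      ultimately show ?thesis unfolding outer_def v_def by (simp add: field_simps)
    qed
    define M' where "M' = M - outer v"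
    have M'e: "M' $ i $ j = M $ i $ j - M $ i $ a * M $ a $ j / of_real r" for i j
      unfolding M'_def by (simp add: ov)
    have hM': "hermitian_mat M'"
      unfolding hermitian_mat_def
    proof (intro allI)
      fix i j
      have c: "cnj (M $ j $ i) = M $ i $ j" "cnj (M $ j $ a) = M $ a $ j" "cnj (M $ a $ i) = M $ i $ a"
        using h unfolding hermitian_mat_def by metis+
      show "M' $ i $ j = cnj (M' $ j $ i)" unfolding M'e complex_cnj_diff complex_cnj_divide complex_cnj_mult c
        by (simp add: mult.commute)
    qed
    have qM': "0 \<le> Re (quad_form M' x)" for x
    proof -
      have cs: "(cmod (sesq M x (axis a 1)))^2 \<le> Re (quad_form M x) * r"
        using cauchy_schwarz_psd[OF insert.prems(1), of x "axis a 1"] by (simp add: quad_axis r_def)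
      have "(\<Sum>i\<in>UNIV. cnj (x $ i) * v $ i) = sesq M x (axis a 1) / of_real (sqrt r)"
        unfolding sesq_axis_right v_def by (simp add: sum_divide_distrib)
      then have "Re (quad_form (outer v) x) = (cmod (sesq M x (axis a 1)))^2 / r"
        using rp by (simp add: quad_outer norm_divide power_divide)
      also have "\<dots> \<le> Re (quad_form M x)" using cs rp by (simp add: divide_le_eq)
      finally show ?thesis unfolding M'_def quad_diff by simp
    qed
    have pM': "psd M'" using hM' qM' by (simp add: psd_def)
    have zM': "\<forall>i j. i \<notin> T \<or> j \<notin> T \<longrightarrow> M' $ i $ j = 0"
    proof (intro allI impI)
      fix i j assume ij: "i \<notin> T \<or> j \<notin> T"
      have rne: "(of_real r :: complex) \<noteq> 0" using rp by simp
      show "M' $ i $ j = 0"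
      proof (cases "i = a \<or> j = a")
        case True
        then show ?thesis unfolding M'e using Maa rne by (auto simp: field_simps)
      next
        case False
        then have "i \<notin> insert a T \<or> j \<notin> insert a T" using ij by auto
        then have "M $ i $ j = 0" "M $ i $ a = 0 \<or> M $ a $ j = 0" using insert.prems(2) by auto
        then show ?thesis unfolding M'e by auto
      qed
    qed
    from insert.IH[OF pM' zM'] obtain \<psi>s where
      ps: "(\<forall>\<psi>\<in>set \<psi>s. \<forall>i. i \<notin> T \<longrightarrow> \<psi> $ i = 0)" "M' = sum_list (map outer \<psi>s)" by blast
    have vs: "\<forall>i. i \<notin> insert a T \<longrightarrow> v $ i = 0" using insert.prems(2) unfolding v_def by auto
    have "M = outer v + M'" unfolding M'_def by simp
    then show ?thesis using ps vs by (intro exI[of _ "v # \<psi>s"]) auto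
  qed
qed



lemma BC_zero: "0 \<in> BC k"
  unfolding BC_def by (rule CollectI, rule exI[of _ "[]"]) simp

lemma BC_add: "A \<in> BC k \<Longrightarrow> B \<in> BC k \<Longrightarrow> A + B \<in> BC k"
  unfolding BC_def
proof (elim CollectE exE conjE, intro CollectI)
  fix as bs
  assume "\<forall>\<psi>\<in>set as. card (block_support \<psi>) \<le> k" "A = sum_list (map outer as)"
     "\<forall>\<psi>\<in>set bs. card (block_support \<psi>) \<le> k" "B = sum_list (map outer bs)"
  then show "\<exists>\<psi>s. (\<forall>\<psi>\<in>set \<psi>s. card (block_support \<psi>) \<le> k) \<and> A + B = sum_list (map outer \<psi>s)"
    by (intro exI[of _ "as @ bs"]) auto
qed

lemma BC_sum: "finite S \<Longrightarrow> (\<And>x. x \<in> S \<Longrightarrow> f x \<in> BC k) \<Longrightarrow> sum f S \<in> BC k"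
  by (induction S rule: finite_induct) (auto intro: BC_add BC_zero)

lemma psd_block_BC:
  fixes M :: "('k::finite, 'd::finite) bmat"
  assumes "psd M" "\<And>p q. fst p \<notin> G \<or> fst q \<notin> G \<Longrightarrow> M $ p $ q = 0" "card G \<le> 2"
  shows "M \<in> BC 2"
proof -
  have fin: "finite {p::'k\<times>'d. fst p \<in> G}" by simp
  have z: "\<forall>i j. i \<notin> {p. fst p \<in> G} \<or> j \<notin> {p. fst p \<in> G} \<longrightarrow> M $ i $ j = 0"
    using assms(2) by simp
  obtain \<psi>s where ps: "\<forall>\<psi>\<in>set \<psi>s. \<forall>i. i \<notin> {p. fst p \<in> G} \<longrightarrow> \<psi> $ i = 0" "M = sum_list (map outer \<psi>s)"
    using psd_decomp[OF fin assms(1) z] by (elim exE conjE)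
  have bs: "block_support \<psi> \<subseteq> G" if "\<psi> \<in> set \<psi>s" for \<psi>
  proof
    fix g assume "g \<in> block_support \<psi>"
    then have "block_comp \<psi> g \<noteq> 0" by (simp add: block_support_def)
    then obtain i where "block_comp \<psi> g $ i \<noteq> 0" by (metis vec_eq_iff zero_index)
    then have "\<psi> $ (g, i) \<noteq> 0" by (simp add: block_comp_def)
    then show "g \<in> G" using ps(1) that by auto
  qed
  have "card (block_support \<psi>) \<le> 2" if "\<psi> \<in> set \<psi>s" for \<psi>
    using card_mono[OF _ bs[OF that]] assms(3) by simp
  then show ?thesis unfolding BC_def using ps(2) by blast
qed

lemma sum_UNIV_pair: "(\<Sum>p\<in>(UNIV::('a::finite \<times> 'b::finite) set). f p) = (\<Sum>a\<in>UNIV. \<Sum>b\<in>UNIV. f (a, b))"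
  by (simp add: sum.cartesian_product UNIV_Times_UNIV[symmetric] del: UNIV_Times_UNIV)

lemma sum_block1: "(\<Sum>p\<in>(UNIV::('a::finite \<times> 'b::finite) set). if fst p = a then f p else 0) = (\<Sum>i\<in>UNIV. f (a, i))"
proof -
  have "(\<lambda>aa. \<Sum>b\<in>UNIV. if fst (aa, b) = a then f (aa, b) else 0) = (\<lambda>aa. if aa = a then \<Sum>b\<in>UNIV. f (a, b) else 0)"
    by (rule ext) auto
  then show ?thesis unfolding sum_UNIV_pair by (simp only:) simp
qed

lemma sum_block2: "(\<Sum>p\<in>(UNIV::('a::finite \<times> 'b::finite) set). \<Sum>q\<in>(UNIV::('a \<times> 'b) set). if fst p = a \<and> fst q = b then f p q else 0)
   = (\<Sum>i\<in>UNIV. \<Sum>j\<in>UNIV. f (a, i) (b, j))"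
proof -
  have "(\<Sum>q\<in>(UNIV::('a \<times> 'b) set). if fst p = a \<and> fst q = b then f p q else 0) =
        (if fst p = a then (\<Sum>j\<in>UNIV. f p (b, j)) else 0)" for p
    using sum_block1[of b "f p"] by auto
  then show ?thesis using sum_block1[of a "\<lambda>p. \<Sum>j\<in>UNIV. f p (b, j)"] by simp
qed

lemma normsq_vec: "(norm (u :: complex ^ 'n::finite))^2 = (\<Sum>i\<in>UNIV. (cmod (u $ i))^2)"
  unfolding norm_vec_def L2_set_def by (simp add: sum_nonneg)

lemma sum_cnj_self: "(\<Sum>i\<in>UNIV. cnj (u $ i) * u $ i) = of_real ((norm (u :: complex ^ 'n::finite))^2)"
  unfolding normsq_vec of_real_sum by (intro sum.cong refl) (simp only: mult.commute[of "cnj _"] complex_norm_square)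

lemma cs_vec: "cmod (\<Sum>i\<in>UNIV. cnj (u $ i) * v $ i) \<le> norm (u :: complex ^ 'n::finite) * norm v"
proof -
  have "cmod (\<Sum>i\<in>UNIV. cnj (u $ i) * v $ i) \<le> (\<Sum>i\<in>UNIV. \<bar>cmod (u $ i)\<bar> * \<bar>cmod (v $ i)\<bar>)"
    by (rule order_trans[OF norm_sum]) (simp add: norm_mult)
  also have "\<dots> \<le> L2_set (\<lambda>i. cmod (u $ i)) UNIV * L2_set (\<lambda>i. cmod (v $ i)) UNIV"
    by (rule L2_set_mult_ineq)
  finally show ?thesis by (simp add: norm_vec_def)
qed

lemma sesq_mv: "sesq A x y = (\<Sum>i\<in>UNIV. cnj (x $ i) * (A *v y) $ i)"
  by (simp add: sesq_def matrix_vector_mult_def sum_distrib_left mult.assoc)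

lemma opnorm_bound: "norm (A *v v) \<le> opnorm A * norm (v :: complex ^ 'n::finite)"
  for A :: "complex ^ 'n ^ 'm::finite"
  unfolding opnorm_def by (rule onorm[OF matrix_vector_mul_bounded_linear])

lemma opnorm_nonneg: "0 \<le> opnorm (A :: complex ^ 'n::finite ^ 'm::finite)"
  unfolding opnorm_def by (rule onorm_pos_le[OF matrix_vector_mul_bounded_linear])



definition cc :: "('k::finite, 'd::finite) bmat \<Rightarrow> 'k \<Rightarrow> real" where
  "cc X g = (\<Sum>b\<in>UNIV - {g}. opnorm (blk X g b))"

definition Qm :: "('k::finite, 'd::finite) bmat \<Rightarrow> 'k \<Rightarrow> 'k \<Rightarrow> ('k, 'd) bmat" where
  "Qm X a b = (\<chi> p q. (if fst p = a \<and> fst q = b then X $ p $ q / 2 else 0)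
     + (if fst q = a \<and> fst p = b then X $ p $ q / 2 else 0)
     + (if p = q \<and> fst p = a then of_real (opnorm (blk X a b)) / 2 else 0)
     + (if p = q \<and> fst p = b then of_real (opnorm (blk X b a)) / 2 else 0))"

definition Dm :: "('k::finite, 'd::finite) bmat \<Rightarrow> 'k \<Rightarrow> ('k, 'd) bmat" where
  "Dm X g = (\<chi> p q. if fst p = g \<and> fst q = g then X $ p $ q - (if p = q then of_real (cc X g) else 0) else 0)"

lemma L1: "(\<Sum>a'\<in>(UNIV::'k::finite set). \<Sum>b'\<in>UNIV - {a'}. if a = a' \<and> b = b' then f a' b' else 0)
   = (if a \<noteq> b then f a b else (0::'c::comm_monoid_add))"
proof -
  have "(\<Sum>b'\<in>UNIV - {a'}. if a = a' \<and> b = b' then f a' b' else 0) = (if a = a' then (if b \<noteq> a' then f a' b else 0) else 0)" for a'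
    by (cases "a = a'") (simp_all add: sum.delta)
  then show ?thesis by (simp add: sum.delta)
qed

lemma L3: "(\<Sum>a'\<in>(UNIV::'k::finite set). \<Sum>b'\<in>UNIV - {a'}. if c \<and> a = a' then g a' b' else 0)
   = (if c then (\<Sum>b'\<in>UNIV - {a}. g a b') else (0::'c::comm_monoid_add))"
proof -
  have "(\<Sum>b'\<in>UNIV - {a'}. if c \<and> a = a' then g a' b' else 0) = (if a = a' then (if c then (\<Sum>b'\<in>UNIV - {a'}. g a' b') else 0) else 0)" for a'
    by (cases "a = a'"; cases c) simp_all
  then show ?thesis by (simp add: sum.delta)
qed

lemma sum_UNIV_minus: "(\<Sum>x\<in>(UNIV::'k::finite set). if a \<noteq> x then h x else 0) = (\<Sum>x\<in>UNIV - {a}. h x :: 'c::comm_monoid_add)"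
proof -
  have "(\<Sum>x\<in>(UNIV::'k set). if a \<noteq> x then h x else 0) = (if a \<noteq> a then h a else 0) + (\<Sum>x\<in>UNIV - {a}. if a \<noteq> x then h x else 0)"
    by (rule sum.remove) simp_all
  also have "(\<Sum>x\<in>UNIV - {a}. if a \<noteq> x then h x else 0) = (\<Sum>x\<in>UNIV - {a}. h x)"
    by (rule sum.cong) auto
  finally show ?thesis by simp
qed

lemma L4: "(\<Sum>a'\<in>(UNIV::'k::finite set). \<Sum>b'\<in>UNIV - {a'}. if c \<and> a = b' then g a' b' else 0)
   = (if c then (\<Sum>a'\<in>UNIV - {a}. g a' a) else (0::'c::comm_monoid_add))"
proof -
  have "(\<Sum>b'\<in>UNIV - {a'}. if c \<and> a = b' then g a' b' else 0) = (if c then (if a \<noteq> a' then g a' a else 0) else 0)" for a'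
    by (cases c) (simp_all add: sum.delta)
  then have "(\<Sum>a'\<in>(UNIV::'k::finite set). \<Sum>b'\<in>UNIV - {a'}. if c \<and> a = b' then g a' b' else 0)
     = (if c then (\<Sum>a'\<in>UNIV. if a \<noteq> a' then g a' a else 0) else 0)" by simp
  then show ?thesis by (simp add: sum_UNIV_minus)
qed

lemma L5: "(\<Sum>g\<in>(UNIV::'k::finite set). if a = g \<and> b = g then h g else 0) = (if a = b then h a else (0::'c::comm_monoid_add))"
proof -
  have "(if a = g \<and> b = g then h g else 0) = (if a = g then (if b = a then h a else 0) else 0)" for g
    by auto
  then show ?thesis by (simp add: sum.delta)
qed


lemma decomp_X:
  fixes X :: "('k::finite, 'd::finite) bmat"
  shows "X = (\<Sum>a\<in>UNIV. \<Sum>b\<in>UNIV - {a}. Qm X a b) + (\<Sum>g\<in>UNIV. Dm X g)"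
proof -
  have "X $ p $ q = ((\<Sum>a\<in>UNIV. \<Sum>b\<in>UNIV - {a}. Qm X a b) + (\<Sum>g\<in>UNIV. Dm X g)) $ p $ q" for p q
  proof -
    have e: "((\<Sum>a\<in>UNIV. \<Sum>b\<in>UNIV - {a}. Qm X a b) + (\<Sum>g\<in>UNIV. Dm X g)) $ p $ q =
      (\<Sum>a\<in>UNIV. \<Sum>b\<in>UNIV - {a}. if fst p = a \<and> fst q = b then X $ p $ q / 2 else 0)
      + (\<Sum>a\<in>UNIV. \<Sum>b\<in>UNIV - {a}. if fst q = a \<and> fst p = b then X $ p $ q / 2 else 0)
      + (\<Sum>a\<in>UNIV. \<Sum>b\<in>UNIV - {a}. if p = q \<and> fst p = a then of_real (opnorm (blk X a b)) / 2 else 0)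
      + (\<Sum>a\<in>UNIV. \<Sum>b\<in>UNIV - {a}. if p = q \<and> fst p = b then of_real (opnorm (blk X b a)) / 2 else 0)
      + (\<Sum>g\<in>UNIV. if fst p = g \<and> fst q = g then X $ p $ q - (if p = q then of_real (cc X g) else 0) else 0)"
      unfolding Qm_def Dm_def by (simp add: sum.distrib)
    have c: "of_real (cc X g) = (\<Sum>b\<in>UNIV - {g}. of_real (opnorm (blk X g b)) / 2) + (\<Sum>b\<in>UNIV - {g}. of_real (opnorm (blk X g b)) / (2::complex))" for g
      unfolding cc_def of_real_sum sum_divide_distrib[symmetric] by simp
    show ?thesis unfolding e L1[of "fst p" "fst q" "\<lambda>_ _. X $ p $ q / 2"] L1[of "fst q" "fst p" "\<lambda>_ _. X $ p $ q / 2"]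
       L3 L4 L5 using c[of "fst p"] by auto
  qed
  then show ?thesis by (simp add: vec_eq_iff)
qed



lemma lam_min:
  fixes A :: "complex ^ 'd::finite ^ 'd"
  assumes h: "hermitian_mat A" and pd: "\<And>u. u \<noteq> 0 \<Longrightarrow> Re (quad_form A u) > 0"
    and c: "c \<le> inverse (opnorm (matrix_inv A))"
  shows "c * (norm u)^2 \<le> Re (quad_form A u)"
proof -
  have q0: "0 \<le> Re (quad_form A v)" for v
  proof (cases "v = 0")
    case True then show ?thesis by (simp add: quad_form_def)
  next
    case False then show ?thesis using pd[of v] by simp
  qed
  have psdA: "psd A" using h q0 by (simp add: psd_def)
  have ker: "\<forall>y. A *v y = 0 \<longrightarrow> y = 0"
  proof (intro allI impI)
    fix y assume "A *v y = 0"
    then have "quad_form A y = 0" by (simp add: quad_sesq sesq_mv)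
    then show "y = 0" using pd[of y] by (cases "y = 0") auto
  qed
  have inv: "invertible A"
    using ker by (simp add: invertible_left_inverse matrix_left_invertible_ker)
  have "\<exists>A'. A ** A' = mat 1 \<and> A' ** A = mat 1" using inv by (simp add: invertible_def)
  then have AI: "A ** matrix_inv A = mat 1 \<and> matrix_inv A ** A = mat 1"
    unfolding matrix_inv_def by (rule someI_ex)
  define N where "N = opnorm (matrix_inv A)"
  define y where "y = matrix_inv A *v u"
  have Ay: "A *v y = u" unfolding y_def by (simp add: matrix_vector_mul_assoc AI)
  have s: "sesq A u y = of_real ((norm u)^2)" unfolding sesq_mv Ay by (rule sum_cnj_self)
  have ny: "norm y \<le> N * norm u" unfolding y_def N_def by (rule opnorm_bound)
  have qyeq: "quad_form A y = (\<Sum>i\<in>UNIV. cnj (y $ i) * u $ i)" unfolding quad_sesq sesq_mv Ay ..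
  have "Re (quad_form A y) \<le> cmod (quad_form A y)" by (rule complex_Re_le_cmod)
  also have "\<dots> \<le> norm y * norm u" unfolding qyeq by (rule cs_vec)
  also have "\<dots> \<le> N * norm u * norm u" using ny by (simp add: mult_right_mono)
  finally have qy0: "Re (quad_form A y) \<le> N * norm u * norm u" .
  then have qy: "Re (quad_form A y) \<le> N * (norm u)^2" by (simp only: power2_eq_square mult.assoc)
  have "((norm u)^2)^2 = (cmod (sesq A u y))^2" unfolding s norm_of_real by simp
  also have "\<dots> \<le> Re (quad_form A u) * Re (quad_form A y)" by (rule cauchy_schwarz_psd[OF psdA])
  also have "\<dots> \<le> Re (quad_form A u) * (N * (norm u)^2)" by (rule mult_left_mono[OF qy q0[of u]])
  finally have key: "((norm u)^2)^2 \<le> Re (quad_form A u) * (N * (norm u)^2)" .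
  show ?thesis
  proof (cases "c \<le> 0")
    case True then show ?thesis using q0[of u] by (meson mult_nonpos_nonneg order_trans zero_le_power2)
  next
    case False
    then have cp: "c > 0" by simp
    then have Np: "N > 0" using c unfolding N_def[symmetric]
      by (metis inverse_nonpositive_iff_nonpositive not_le order_le_less_trans)
    show ?thesis
    proof (cases "u = 0")
      case True then show ?thesis by (simp add: quad_form_def)
    next
      case False
      then have up: "(norm u)^2 > 0" by simp
      from key have "(norm u)^2 * (norm u)^2 \<le> (Re (quad_form A u) * N) * (norm u)^2"
        by (simp add: power2_eq_square mult_ac)
      then have k2: "(norm u)^2 \<le> Re (quad_form A u) * N" by (rule mult_right_le_imp_le[OF _ up])
      have "c * (norm u)^2 \<le> inverse N * (norm u)^2" using c up unfolding N_def[symmetric] by simp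
      also have "\<dots> \<le> Re (quad_form A u)" using k2 Np by (simp add: field_simps)
      finally show ?thesis .
    qed
  qed
qed



lemma sesq_adj:
  assumes "\<And>i j. B $ j $ i = cnj (A $ i $ j)"
  shows "sesq B w u = cnj (sesq A u w)"
proof -
  have "cnj (sesq A u w) = (\<Sum>i\<in>UNIV. \<Sum>j\<in>UNIV. cnj (w $ j) * B $ j $ i * u $ i)"
    unfolding sesq_def cnj_sum by (intro sum.cong refl) (simp add: assms mult.commute mult.left_commute)
  also have "\<dots> = sesq B w u" unfolding sesq_def by (rule sum.swap)
  finally show ?thesis by simp
qed

lemma amgm:
  fixes t a b U W :: real
  assumes "0 \<le> a" "0 \<le> b" "0 \<le> U" "0 \<le> W" "0 \<le> t" "t \<le> U * (a * W)" "t \<le> W * (b * U)"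
  shows "t \<le> (a * U^2 + b * W^2) / 2"
proof -
  have "t * t \<le> (U * (a * W)) * (W * (b * U))"
    by (rule mult_mono) (use assms in auto)
  also have "\<dots> \<le> ((a * U^2 + b * W^2) / 2)^2"
  proof -
    have "0 \<le> (a * U^2 - b * W^2)^2" by simp
    then show ?thesis by (simp add: power2_eq_square algebra_simps)
  qed
  finally have "t^2 \<le> ((a * U^2 + b * W^2) / 2)^2" by (simp add: power2_eq_square)
  then show ?thesis by (rule power2_le_imp_le) (use assms in simp)
qed


lemma S_block:
  fixes x :: "('k::finite, 'd::finite) bvec"
  shows "(\<Sum>p\<in>UNIV. \<Sum>q\<in>UNIV. cnj (x $ p) * (if fst p = a \<and> fst q = b then F p q else 0) * x $ q)
     = (\<Sum>i\<in>UNIV. \<Sum>j\<in>UNIV. cnj (block_comp x a $ i) * F (a, i) (b, j) * block_comp x b $ j)"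
proof -
  have "cnj (x $ p) * (if fst p = a \<and> fst q = b then F p q else 0) * x $ q
      = (if fst p = a \<and> fst q = b then cnj (x $ p) * F p q * x $ q else 0)" for p q by simp
  then show ?thesis by (simp add: sum_block2 block_comp_def)
qed

lemma S_diag:
  fixes x :: "('k::finite, 'd::finite) bvec"
  shows "(\<Sum>p\<in>UNIV. \<Sum>q\<in>UNIV. cnj (x $ p) * (if p = q \<and> fst p = a then r else 0) * x $ q)
     = r * of_real ((norm (block_comp x a))^2)"
proof -
  have "(\<Sum>q\<in>UNIV. cnj (x $ p) * (if p = q \<and> fst p = a then r else 0) * x $ q)
      = (if fst p = a then r * (cnj (x $ p) * x $ p) else 0)" for p
  proof (cases "fst p = a")
    case True
    have "(\<Sum>q\<in>UNIV. cnj (x $ p) * (if p = q \<and> fst p = a then r else 0) * x $ q)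
       = (\<Sum>q\<in>UNIV. if p = q then r * (cnj (x $ p) * x $ p) else 0)"
      by (intro sum.cong refl) (auto simp: True)
    then show ?thesis using True by (simp add: sum.delta)
  next
    case False then show ?thesis by simp
  qed
  then have "(\<Sum>p\<in>UNIV. \<Sum>q\<in>UNIV. cnj (x $ p) * (if p = q \<and> fst p = a then r else 0) * x $ q)
     = (\<Sum>i\<in>UNIV. r * (cnj (x $ (a, i)) * x $ (a, i)))" by (simp add: sum_block1)
  also have "\<dots> = r * (\<Sum>i\<in>UNIV. cnj (block_comp x a $ i) * block_comp x a $ i)"
    by (simp add: sum_distrib_left block_comp_def)
  finally show ?thesis by (simp add: sum_cnj_self)
qed

lemma Qm_herm:
  assumes hX: "hermitian_mat X"
  shows "hermitian_mat (Qm X a b)"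
  unfolding hermitian_mat_def
proof (intro allI)
  fix p q
  have c1: "cnj (X $ q $ p) = X $ p $ q" using hX unfolding hermitian_mat_def by metis
  have c2: "cnj (X $ p $ q) = X $ q $ p" using hX unfolding hermitian_mat_def by metis
  have h1: "cnj (if fst q = a \<and> fst p = b then X $ q $ p / 2 else 0) = (if fst q = a \<and> fst p = b then X $ p $ q / 2 else 0)"
    by (simp add: c1)
  have h2: "cnj (if fst p = a \<and> fst q = b then X $ q $ p / 2 else 0) = (if fst p = a \<and> fst q = b then X $ p $ q / 2 else 0)"
    by (simp add: c1)
  have h3: "cnj (if q = p \<and> fst q = c then (of_real r :: complex) / 2 else 0) = (if p = q \<and> fst p = c then of_real r / 2 else 0)" for r c
    by (cases "p = q") simp_all
  show "Qm X a b $ p $ q = cnj (Qm X a b $ q $ p)"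
    unfolding Qm_def vec_lambda_beta complex_cnj_add h1 h2 h3 by (simp only: add_ac)
qed

lemma Qm_psd:
  fixes X :: "('k::finite, 'd::finite) bmat"
  assumes hX: "hermitian_mat X" and ab: "a \<noteq> b"
  shows "psd (Qm X a b)"
proof -
  have "0 \<le> Re (quad_form (Qm X a b) x)" for x
  proof -
    define u where "u = block_comp x a"
    define w where "w = block_comp x b"
    define Y where "Y = blk X a b"
    define Y' where "Y' = blk X b a"
    define z where "z = sesq Y u w"
    define ra where "ra = opnorm Y"
    define rb where "rb = opnorm Y'"
    have adj: "Y' $ j $ i = cnj (Y $ i $ j)" for i j
    proof -
      have "X $ (b, j) $ (a, i) = cnj (X $ (a, i) $ (b, j))" using hX unfolding hermitian_mat_def by metis
      then show ?thesis unfolding Y_def Y'_def blk_def by simp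
    qed
    have S1: "(\<Sum>p\<in>UNIV. \<Sum>q\<in>UNIV. cnj (x $ p) * (if fst p = a \<and> fst q = b then X $ p $ q / 2 else 0) * x $ q) = z / 2"
      unfolding S_block z_def sesq_def u_def w_def Y_def blk_def
      by (simp add: sum_divide_distrib mult.assoc)
    have "(\<Sum>p\<in>UNIV. \<Sum>q\<in>UNIV. cnj (x $ p) * (if fst q = a \<and> fst p = b then X $ p $ q / 2 else 0) * x $ q)
       = (\<Sum>p\<in>UNIV. \<Sum>q\<in>UNIV. cnj (x $ p) * (if fst p = b \<and> fst q = a then X $ p $ q / 2 else 0) * x $ q)"
      by (intro sum.cong refl) auto
    also have "\<dots> = sesq Y' w u / 2"
      unfolding S_block sesq_def u_def w_def Y'_def blk_def
      by (simp add: sum_divide_distrib mult.assoc)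
    also have "sesq Y' w u = cnj z" unfolding z_def by (rule sesq_adj[OF adj])
    finally have S2: "(\<Sum>p\<in>UNIV. \<Sum>q\<in>UNIV. cnj (x $ p) * (if fst q = a \<and> fst p = b then X $ p $ q / 2 else 0) * x $ q) = cnj z / 2" .
    have qe: "quad_form (Qm X a b) x =
        (\<Sum>p\<in>UNIV. \<Sum>q\<in>UNIV. cnj (x $ p) * (if fst p = a \<and> fst q = b then X $ p $ q / 2 else 0) * x $ q)
      + (\<Sum>p\<in>UNIV. \<Sum>q\<in>UNIV. cnj (x $ p) * (if fst q = a \<and> fst p = b then X $ p $ q / 2 else 0) * x $ q)
      + (\<Sum>p\<in>UNIV. \<Sum>q\<in>UNIV. cnj (x $ p) * (if p = q \<and> fst p = a then of_real ra / 2 else 0) * x $ q)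
      + (\<Sum>p\<in>UNIV. \<Sum>q\<in>UNIV. cnj (x $ p) * (if p = q \<and> fst p = b then of_real rb / 2 else 0) * x $ q)"
      unfolding quad_form_def Qm_def ra_def rb_def Y_def Y'_def
      by (simp add: distrib_left distrib_right sum.distrib)
    have q: "quad_form (Qm X a b) x = z / 2 + cnj z / 2 + of_real ra / 2 * of_real ((norm u)^2)
        + of_real rb / 2 * of_real ((norm w)^2)"
      unfolding qe S1 S2 S_diag u_def w_def ..
    have req: "Re (quad_form (Qm X a b) x) = Re z + ra * (norm u)^2 / 2 + rb * (norm w)^2 / 2"
      unfolding q by simp
    have ra0: "0 \<le> ra" "0 \<le> rb" unfolding ra_def rb_def by (simp_all add: opnorm_nonneg)
    have b1: "cmod z \<le> norm u * (ra * norm w)"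
    proof -
      have "cmod z \<le> norm u * norm (Y *v w)" unfolding z_def sesq_mv by (rule cs_vec)
      also have "\<dots> \<le> norm u * (ra * norm w)" unfolding ra_def by (rule mult_left_mono[OF opnorm_bound norm_ge_zero])
      finally show ?thesis .
    qed
    have b2: "cmod z \<le> norm w * (rb * norm u)"
    proof -
      have "cmod z = cmod (sesq Y' w u)" using sesq_adj[OF adj, of w u] by (simp add: z_def)
      also have "\<dots> \<le> norm w * norm (Y' *v u)" unfolding sesq_mv by (rule cs_vec)
      also have "\<dots> \<le> norm w * (rb * norm u)" unfolding rb_def by (rule mult_left_mono[OF opnorm_bound norm_ge_zero])
      finally show ?thesis .
    qed
    have "cmod z \<le> (ra * (norm u)^2 + rb * (norm w)^2) / 2"
      by (rule amgm[OF ra0 norm_ge_zero norm_ge_zero norm_ge_zero b1 b2])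
    moreover have "- cmod z \<le> Re z" using abs_Re_le_cmod[of z] by linarith
    ultimately have "0 \<le> Re z + (ra * (norm u)^2 + rb * (norm w)^2) / 2" by linarith
    then show ?thesis unfolding req by (simp add: add_divide_distrib add.assoc)
  qed
  then show ?thesis using Qm_herm[OF hX] by (simp add: psd_def)
qed


lemma Dm_herm:
  assumes hX: "hermitian_mat X"
  shows "hermitian_mat (Dm X g)"
  unfolding hermitian_mat_def
proof (intro allI)
  fix p q
  have c1: "cnj (X $ q $ p) = X $ p $ q" using hX unfolding hermitian_mat_def by metis
  show "Dm X g $ p $ q = cnj (Dm X g $ q $ p)"
  proof (cases "p = q")
    case True
    have d: "cnj (X $ p $ p) = X $ p $ p" using hX unfolding hermitian_mat_def by metis
    show ?thesis unfolding True[symmetric] Dm_def vec_lambda_beta by (simp add: d)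
  next
    case False then show ?thesis unfolding Dm_def vec_lambda_beta by (simp add: c1)
  qed
qed

lemma quad_embed:
  fixes X :: "('k::finite, 'd::finite) bmat"
  shows "quad_form X (\<chi> p. if fst p = g then u $ snd p else 0) = quad_form (blk X g g) u"
proof -
  let ?e = "(\<chi> p. if fst p = g then u $ snd p else 0) :: ('k, 'd) bvec"
  have "cnj (?e $ p) * X $ p $ q * ?e $ q = cnj (?e $ p) * (if fst p = g \<and> fst q = g then X $ p $ q else 0) * ?e $ q" for p q
    by simp
  then have "quad_form X ?e = (\<Sum>p\<in>UNIV. \<Sum>q\<in>UNIV. cnj (?e $ p) * (if fst p = g \<and> fst q = g then X $ p $ q else 0) * ?e $ q)"
    unfolding quad_form_def by presburger
  also have "\<dots> = quad_form (blk X g g) u"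
    unfolding S_block by (simp add: quad_form_def block_comp_def blk_def)
  finally show ?thesis .
qed

lemma Dm_psd:
  fixes X :: "('k::finite, 'd::finite) bmat"
  assumes pX: "pos_def X" and dd: "block_diag_dominant X"
  shows "psd (Dm X g)"
proof -
  have hX: "hermitian_mat X" using pX by (simp add: pos_def_def)
  define A where "A = blk X g g"
  have hA: "hermitian_mat A" unfolding hermitian_mat_def A_def blk_def vec_lambda_beta
    using hX unfolding hermitian_mat_def by blast
  have pdA: "Re (quad_form A u) > 0" if u0: "u \<noteq> 0" for u
  proof -
    let ?e = "(\<chi> p. if fst p = g then u $ snd p else 0) :: ('k, 'd) bvec"
    obtain i where "u $ i \<noteq> 0" using u0 by (metis vec_eq_iff zero_index)
    then have "?e $ (g, i) \<noteq> 0" by simp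
    then have "?e \<noteq> 0" by (metis zero_index)
    then have "Re (quad_form X ?e) > 0" using pX by (simp add: pos_def_def)
    then show ?thesis unfolding A_def quad_embed .
  qed
  have cle: "cc X g \<le> inverse (opnorm (matrix_inv A))"
    using dd unfolding block_diag_dominant_def cc_def A_def by blast
  have "0 \<le> Re (quad_form (Dm X g) x)" for x
  proof -
    define u where "u = block_comp x g"
    have "quad_form (Dm X g) x = (\<Sum>p\<in>UNIV. \<Sum>q\<in>UNIV. cnj (x $ p) *
        (if fst p = g \<and> fst q = g then X $ p $ q - (if p = q then of_real (cc X g) else 0) else 0) * x $ q)"
      unfolding quad_form_def Dm_def by simp
    also have "\<dots> = (\<Sum>i\<in>UNIV. \<Sum>j\<in>UNIV. cnj (u $ i) * (A $ i $ j - (if i = j then of_real (cc X g) else 0)) * u $ j)"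
      unfolding S_block u_def A_def blk_def by simp
    also have "\<dots> = quad_form A u - of_real (cc X g) * (\<Sum>i\<in>UNIV. cnj (u $ i) * u $ i)"
    proof -
      have "(\<Sum>j\<in>UNIV. cnj (u $ i) * (A $ i $ j - (if i = j then of_real (cc X g) else 0)) * u $ j)
          = (\<Sum>j\<in>UNIV. cnj (u $ i) * A $ i $ j * u $ j) - of_real (cc X g) * (cnj (u $ i) * u $ i)" for i
      proof -
        have "(\<Sum>j\<in>UNIV. cnj (u $ i) * (A $ i $ j - (if i = j then of_real (cc X g) else 0)) * u $ j)
          = (\<Sum>j\<in>UNIV. cnj (u $ i) * A $ i $ j * u $ j - (if i = j then of_real (cc X g) * (cnj (u $ i) * u $ j) else 0))"
          by (intro sum.cong refl) (simp add: algebra_simps)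
        also have "\<dots> = (\<Sum>j\<in>UNIV. cnj (u $ i) * A $ i $ j * u $ j) - of_real (cc X g) * (cnj (u $ i) * u $ i)"
          by (simp add: sum_subtractf sum.delta)
        finally show ?thesis .
      qed
      then show ?thesis unfolding quad_form_def by (simp add: sum_subtractf sum_distrib_left)
    qed
    also have "\<dots> = quad_form A u - of_real (cc X g * (norm u)^2)" by (simp add: sum_cnj_self)
    finally have "Re (quad_form (Dm X g) x) = Re (quad_form A u) - cc X g * (norm u)^2" by simp
    moreover have "cc X g * (norm u)^2 \<le> Re (quad_form A u)" by (rule lam_min[OF hA pdA cle])
    ultimately show ?thesis by simp
  qed
  then show ?thesis using Dm_herm[OF hX] by (simp add: psd_def)
qed

theorem mainTheorem5:
  fixes X :: "('k::finite, 'd::finite) bmat"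
  assumes "pos_def X"
    and "block_diag_dominant X"
  shows "X \<in> BC 2"
proof -
  have hX: "hermitian_mat X" using assms(1) by (simp add: pos_def_def)
  have Q: "Qm X a b \<in> BC 2" if "a \<noteq> b" for a b
  proof (rule psd_block_BC[of _ "{a, b}"])
    show "psd (Qm X a b)" by (rule Qm_psd[OF hX that])
    show "Qm X a b $ p $ q = 0" if "fst p \<notin> {a, b} \<or> fst q \<notin> {a, b}" for p q
    proof -
      have nc: "(fst p = a \<and> fst q = b) = False" "(fst q = a \<and> fst p = b) = False"
        "(p = q \<and> fst p = a) = False" "(p = q \<and> fst p = b) = False" using that by auto
      show ?thesis unfolding Qm_def vec_lambda_beta nc if_False by simp
    qed
    show "card {a, b} \<le> 2" by (simp add: card_insert_if)
  qed
  have D: "Dm X g \<in> BC 2" for g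
  proof (rule psd_block_BC[of _ "{g}"])
    show "psd (Dm X g)" by (rule Dm_psd[OF assms])
    show "Dm X g $ p $ q = 0" if "fst p \<notin> {g} \<or> fst q \<notin> {g}" for p q
    proof -
      have nc: "(fst p = g \<and> fst q = g) = False" using that by simp
      show ?thesis unfolding Dm_def vec_lambda_beta nc if_False by (rule refl)
    qed
    show "card {g} \<le> 2" by simp
  qed
  have "(\<Sum>a\<in>UNIV. \<Sum>b\<in>UNIV - {a}. Qm X a b) \<in> BC 2"
    by (intro BC_sum) (auto intro: Q)
  moreover have "(\<Sum>g\<in>UNIV. Dm X g) \<in> BC 2"
    by (intro BC_sum) (auto intro: D)
  ultimately have R: "(\<Sum>a\<in>UNIV. \<Sum>b\<in>UNIV - {a}. Qm X a b) + (\<Sum>g\<in>UNIV. Dm X g) \<in> BC 2"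
    by (rule BC_add)
  show ?thesis by (subst decomp_X[of X]) (rule R)
qed


end
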